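(* Let $f:\Sigma\to O$ be a social choice function. (i) If $f$ is pseudomonotone, then for every $\varepsilon>0$ there is a lex-truthful randomized mechanism that $\varepsilon$-implements $f$. (ii) Conversely, if for some $\varepsilon<\frac12$ there is a lex-truthful randomized mechanism that $\varepsilon$-implements $f$, then $f$ is pseudomonotone.
   Context: Setting: a set $N$ of $n$ agents, a finite set $O$ of $m$ outcomes, and for each agent $j$ a set $\Sigma_j$ of allowed strict total orders on $O$; $\Sigma=\prod_j\Sigma_j$. For a strict order $\succ$, $\succ(\ell)$ is its $\ell$-th ranked outcome and $\mathrm{pos}_\succ(o)$ the position of $o$; $a\succeq b$ means $a\succ b$ or $a=b$. A social choice function is a map $f:\Sigma\to O$. $f$ is pseudomonotone if for every agent $j$, every $\succ_{-j}$, and all $\succ_j,\succ'_j\in\Sigma_j$, setting $o=f(\succ_j,\succ_{-j})$ and $o'=f(\succ'_j,\succ_{-j})$, either $o\succeq_j o'$, or there is an outcome $o''$ with $o''\succ_j o'$ and $\mathrm{pos}_{\succ_j}(o'')<\mathrm{pos}_{\succ'_j}(o'')$. A randomized mechanism maps profiles to probability distributions over $O$; it $\varepsilon$-implements $f$ if $\Pr[\mathcal{M}(\succ)=f(\succ)]\ge1-\varepsilon$ for all $\succ\in\Sigma$. For lotteries $p\ne q$, $p$ lexicographically dominates $q$ w.r.t. $\succ$ if there is $i$ with $p(\succ(i))>q(\succ(i))$ and $p(\succ(\ell))=q(\succ(\ell))$ for all $\ell<i$. $\mathcal{M}$ is lex-truthful if for all $j$, $\succ_j,\succ'_j\in\Sigma_j$,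 $\succ_{-j}$: either $\mathcal{M}(\succ_j,\succ_{-j})=\mathcal{M}(\succ'_j,\succ_{-j})$ (as distributions) or $\mathcal{M}(\succ_j,\succ_{-j})$ lexicographically dominates $\mathcal{M}(\succ'_j,\succ_{-j})$ w.r.t. $\succ_j$. *)

theory Defs
  imports "HOL-Probability.Probability_Mass_Function"
begin

text \<open>A strict total order on the outcomes is represented by its ranking list
(best outcome first): a list that enumerates every outcome exactly once.
Positions are 0-based (pos r o), the l-th ranked outcome is r ! l.\<close>

definition ranking :: "'o list \<Rightarrow> bool" where
  "ranking r \<longleftrightarrow> distinct r \<and> set r = UNIV"

definition pos :: "'o list \<Rightarrow> 'o \<Rightarrow> nat" where
  "pos r a = (LEAST i. i < length r \<and> r ! i = a)"

definition prefers :: "'o list \<Rightarrow> 'o \<Rightarrow> 'o \<Rightarrow> bool" where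
  "prefers r a b \<longleftrightarrow> pos r a < pos r b"

definition weakly_prefers :: "'o list \<Rightarrow> 'o \<Rightarrow> 'o \<Rightarrow> bool" where
  "weakly_prefers r a b \<longleftrightarrow> prefers r a b \<or> a = b"

definition profile :: "('n \<Rightarrow> 'o list set) \<Rightarrow> ('n \<Rightarrow> 'o list) \<Rightarrow> bool" where
  "profile Sig p \<longleftrightarrow> (\<forall>j. p j \<in> Sig j)"

definition pseudomonotone ::
  "('n \<Rightarrow> 'o list set) \<Rightarrow> (('n \<Rightarrow> 'o list) \<Rightarrow> 'o) \<Rightarrow> bool" where
  "pseudomonotone Sig f \<longleftrightarrow>
     (\<forall>j p r r'. profile Sig p \<and> r \<in> Sig j \<and> r' \<in> Sig j \<longrightarrow>
        (let o1 = f (p(j := r)); o2 = f (p(j := r')) in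
          weakly_prefers r o1 o2 \<or>
          (\<exists>o3. prefers r o3 o2 \<and> pos r o3 < pos r' o3)))"

definition eps_implements ::
  "('n \<Rightarrow> 'o list set) \<Rightarrow> (('n \<Rightarrow> 'o list) \<Rightarrow> 'o pmf) \<Rightarrow> (('n \<Rightarrow> 'o list) \<Rightarrow> 'o) \<Rightarrow> real \<Rightarrow> bool" where
  "eps_implements Sig M f \<epsilon> \<longleftrightarrow> (\<forall>p. profile Sig p \<longrightarrow> pmf (M p) (f p) \<ge> 1 - \<epsilon>)"

definition lex_dominates :: "'o list \<Rightarrow> 'o pmf \<Rightarrow> 'o pmf \<Rightarrow> bool" where
  "lex_dominates r P Q \<longleftrightarrow> P \<noteq> Q \<and>
     (\<exists>i < length r. pmf P (r ! i) > pmf Q (r ! i) \<and>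
        (\<forall>l < i. pmf P (r ! l) = pmf Q (r ! l)))"

definition lex_truthful ::
  "('n \<Rightarrow> 'o list set) \<Rightarrow> (('n \<Rightarrow> 'o list) \<Rightarrow> 'o pmf) \<Rightarrow> bool" where
  "lex_truthful Sig M \<longleftrightarrow>
     (\<forall>j p r r'. profile Sig p \<and> r \<in> Sig j \<and> r' \<in> Sig j \<longrightarrow>
        M (p(j := r)) = M (p(j := r')) \<or> lex_dominates r (M (p(j := r))) (M (p(j := r'))))"

end

theory Submission
  imports Defs
begin

lemma ranking_len: "ranking (r::'o::finite list) \<Longrightarrow> length r = CARD('o)"
  unfolding ranking_def by (metis distinct_card)

lemma pos_ok:
  assumes "ranking r"
  shows "pos r a < length r \<and> r ! pos r a = a"
proof -
  have "a \<in> set r" using assms unfolding ranking_def by auto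
  then obtain i where "i < length r \<and> r ! i = a" by (auto simp: in_set_conv_nth)
  then show ?thesis unfolding pos_def by (rule LeastI)
qed

lemma pos_nth:
  assumes "ranking r" "i < length r"
  shows "pos r (r ! i) = i"
proof -
  have d: "distinct r" using assms unfolding ranking_def by auto
  from pos_ok[OF assms(1), of "r!i"] have "pos r (r!i) < length r" "r ! pos r (r!i) = r ! i" by auto
  then show ?thesis using d assms(2) nth_eq_iff_index_eq by blast
qed

lemma pos_inj:
  assumes "ranking r" "pos r a = pos r b"
  shows "a = b"
  by (metis assms pos_ok)

lemma two_le1: "a \<noteq> b \<Longrightarrow> pmf (P::'o::finite pmf) a + pmf P b \<le> 1"
proof -
  assume "a \<noteq> b"
  have "measure (measure_pmf P) {a,b} = sum (pmf P) {a,b}"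
    by (rule measure_measure_pmf_finite) simp
  then have "pmf P a + pmf P b = measure (measure_pmf P) {a,b}" using \<open>a\<noteq>b\<close> by simp
  also have "\<dots> \<le> 1" by (rule measure_pmf.prob_le_1)
  finally show ?thesis .
qed

lemma prefix_agree:
  assumes r: "ranking (r::'o::finite list)" and r': "ranking r'"
    and H: "\<forall>o3. pos r o3 < k \<longrightarrow> pos r' o3 \<le> pos r o3" and k: "k \<le> length r"
  shows "\<forall>l<k. r' ! l = r ! l"
proof (intro allI impI)
  fix l assume "l < k"
  then show "r' ! l = r ! l"
  proof (induction l rule: less_induct)
    case (less l)
    have lr: "l < length r" using less k by auto
    have lr': "length r' = length r" using r r' ranking_len by metis
    define a where "a = r ! l"
    have pa: "pos r a = l" using pos_nth[OF r lr] a_def by simp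
    then have "pos r' a \<le> l" using H less by auto
    moreover have "\<not> pos r' a < l"
    proof
      assume lt: "pos r' a < l"
      then have "r' ! pos r' a = r ! pos r' a" using less by auto
      then have "r ! pos r' a = a" using pos_ok[OF r', of a] by simp
      then have "pos r a = pos r' a" using pos_nth[OF r] lt lr
        by (metis less_trans)
      then show False using pa lt by simp
    qed
    ultimately have "pos r' a = l" by simp
    then show ?case using pos_ok[OF r', of a] a_def by simp
  qed
qed

lemma part2:
  fixes Sig :: "'n::finite \<Rightarrow> 'o::finite list set"
    and f :: "('n \<Rightarrow> 'o list) \<Rightarrow> 'o"
  assumes R: "\<forall>j. \<forall>r \<in> Sig j. ranking r"
    and eps: "\<epsilon> < 1/2" and LT: "lex_truthful Sig M" and EI: "eps_implements Sig M f \<epsilon>"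
  shows "pseudomonotone Sig f"
  unfolding pseudomonotone_def Let_def
proof (intro allI impI)
  fix j p r r'
  assume A: "profile Sig p \<and> r \<in> Sig j \<and> r' \<in> Sig j"
  define o1 where "o1 = f (p(j:=r))"
  define o2 where "o2 = f (p(j:=r'))"
  define P where "P = M (p(j:=r))"
  define Q where "Q = M (p(j:=r'))"
  have rr: "ranking r" "ranking r'" using A R by auto
  have pr1: "profile Sig (p(j:=r))" "profile Sig (p(j:=r'))" using A unfolding profile_def by auto
  have P1: "pmf P o1 \<ge> 1 - \<epsilon>" using EI pr1 unfolding eps_implements_def P_def o1_def by auto
  have Q2: "pmf Q o2 \<ge> 1 - \<epsilon>" using EI pr1 unfolding eps_implements_def Q_def o2_def by auto
  show "weakly_prefers r o1 o2 \<or> (\<exists>o3. prefers r o3 o2 \<and> pos r o3 < pos r' o3)"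
  proof (rule ccontr)
    assume neg: "\<not> ?thesis"
    then have ne: "o1 \<noteq> o2" unfolding weakly_prefers_def by auto
    have H: "\<forall>o3. pos r o3 < pos r o2 \<longrightarrow> pos r' o3 \<le> pos r o3"
      using neg unfolding prefers_def by auto
    have agree: "\<forall>l<pos r o2. r' ! l = r ! l"
      by (rule prefix_agree[OF rr H]) (use pos_ok[OF rr(1), of o2] in simp)
    have Po2: "pmf P o2 < pmf Q o2" using two_le1[OF ne, of P] P1 Q2 eps by linarith
    have Qo1: "pmf Q o1 < pmf P o1" using two_le1[OF ne, of Q] P1 Q2 eps by linarith
    have PQ: "P \<noteq> Q" using Po2 by auto
    have "lex_dominates r P Q"
      using LT A PQ unfolding lex_truthful_def P_def Q_def by blast
    then obtain i where i: "i < length r" "pmf P (r!i) > pmf Q (r!i)"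
      "\<forall>l<i. pmf P (r!l) = pmf Q (r!l)" unfolding lex_dominates_def by auto
    have "lex_dominates r' Q P"
      using LT A PQ unfolding lex_truthful_def P_def Q_def by metis
    then obtain i' where i': "i' < length r'" "pmf Q (r'!i') > pmf P (r'!i')"
      "\<forall>l<i'. pmf Q (r'!l) = pmf P (r'!l)" unfolding lex_dominates_def by auto
    have po2: "pos r o2 < length r" "r ! pos r o2 = o2" using pos_ok[OF rr(1)] by auto
    have "i < pos r o2"
    proof (rule ccontr)
      assume "\<not> i < pos r o2"
      then consider "i = pos r o2" | "pos r o2 < i" by linarith
      then show False
      proof cases
        case 1 then show False using i po2 Po2 by auto
      next
        case 2 then show False using i(3) po2 Po2 by force
      qed
    qed
    then show False
    proof -
      assume ik: "i < pos r o2"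
      consider "i' < i" | "i < i'" | "i = i'" by linarith
      then show False
      proof cases
        case 1
        then show False using i i' agree ik by (metis less_trans order.strict_iff_not)
      next
        case 2
        then show False using i i' agree ik by (metis order.strict_iff_not)
      next
        case 3
        then show False using i i' agree ik by (metis order.strict_iff_not)
      qed
    qed
  qed
qed


definition wt :: "'o::finite list \<Rightarrow> 'o \<Rightarrow> real" where
  "wt r a = real (CARD('o) - pos r a)"

lemma sum_wt:
  assumes r: "ranking (r::'o::finite list)"
  shows "(\<Sum>a\<in>UNIV. wt r a) = (\<Sum>k<CARD('o). real (CARD('o) - k))"
proof -
  have b: "bij_betw (pos r) UNIV {..<CARD('o)}"
    unfolding bij_betw_def
  proof
    show "inj (pos r)" by (meson inj_onI pos_inj r)
    show "range (pos r) = {..<CARD('o)}"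
    proof
      show "range (pos r) \<subseteq> {..<CARD('o)}" using pos_ok[OF r] ranking_len[OF r] by auto
      show "{..<CARD('o)} \<subseteq> range (pos r)"
      proof
        fix k assume "k \<in> {..<CARD('o)}"
        then have "pos r (r ! k) = k" using pos_nth[OF r] ranking_len[OF r] by auto
        then show "k \<in> range (pos r)" by (metis rangeI)
      qed
    qed
  qed
  show ?thesis unfolding wt_def
    by (rule sum.reindex_bij_betw[OF b, of "\<lambda>k. real (CARD('o) - k)"])
qed

lemma sum_upd: "(\<Sum>j'\<in>UNIV. (h::'n::finite \<Rightarrow> real) j') = h j + (\<Sum>j'\<in>UNIV-{j}. h j')"
  by (simp add: sum.remove)

lemma part1:
  fixes Sig :: "'n::finite \<Rightarrow> 'o::finite list set"
    and f :: "('n \<Rightarrow> 'o list) \<Rightarrow> 'o"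
  assumes R: "\<forall>j. \<forall>r \<in> Sig j. ranking r"
    and PM: "pseudomonotone Sig f" and epos: "\<epsilon> > 0"
  shows "\<exists>M. lex_truthful Sig M \<and> eps_implements Sig M f \<epsilon>"
proof -
  define m where "m = CARD('o)"
  define n where "n = CARD('n)"
  define S where "S = (\<Sum>k<m. real (m - k))"
  define e where "e = min \<epsilon> (1/2)"
  define c where "c = e / (real n * S)"
  define g where "g p a = (1-e) * (if f p = a then 1 else 0) + c * (\<Sum>j\<in>UNIV. wt (p j) a)"
    for p :: "'n \<Rightarrow> 'o list" and a
  define M where "M p = (if profile Sig p then embed_pmf (g p) else return_pmf (f p))" for p
  have m0: "m > 0" unfolding m_def by simp
  have n0: "n > 0" unfolding n_def by simp
  have S0: "S > 0"
  proof -
    have "real (m - 0) \<le> S" unfolding S_def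
      by (rule member_le_sum) (use m0 in auto)
    then show ?thesis using m0 by simp
  qed
  have e0: "e > 0" "e \<le> 1/2" "e \<le> \<epsilon>" unfolding e_def using epos by auto
  have c0: "c > 0" unfolding c_def using e0 S0 n0 by simp
  have gnn: "g p a \<ge> 0" for p a
  proof -
    have "c * (\<Sum>j\<in>UNIV. wt (p j) a) \<ge> 0"
      using c0 by (intro mult_nonneg_nonneg sum_nonneg) (auto simp: wt_def)
    moreover have "(1-e) * (if f p = a then 1 else 0) \<ge> 0" using e0 by simp
    ultimately show ?thesis unfolding g_def by linarith
  qed
  have gsum: "(\<Sum>a\<in>UNIV. g p a) = 1" if "profile Sig p" for p
  proof -
    have rk: "ranking (p j)" for j using that R unfolding profile_def by auto
    have "(\<Sum>a\<in>UNIV. g p a) = (1-e) * (\<Sum>a\<in>UNIV. (if f p = a then 1 else 0))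
        + c * (\<Sum>a\<in>UNIV. \<Sum>j\<in>UNIV. wt (p j) a)"
      unfolding g_def by (simp only: sum.distrib sum_distrib_left)
    also have "(\<Sum>a\<in>UNIV. (if f p = a then 1 else 0::real)) = 1" by simp
    also have "(\<Sum>a\<in>UNIV. \<Sum>j\<in>UNIV. wt (p j) a) = (\<Sum>j\<in>UNIV. \<Sum>a\<in>UNIV. wt (p j) a)"
      by (rule sum.swap)
    also have "\<dots> = (\<Sum>j\<in>(UNIV::'n set). S)"
      using sum_wt[OF rk] unfolding S_def m_def by simp
    also have "\<dots> = real n * S" unfolding n_def by simp
    finally show ?thesis unfolding c_def using S0 n0 by simp
  qed
  have pmfM: "pmf (M p) a = g p a" if "profile Sig p" for p a
  proof -
    have "(\<integral>\<^sup>+x. ennreal (g p x) \<partial>count_space UNIV) = 1"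
      using gsum[OF that] gnn
      by (simp add: nn_integral_count_space_finite sum_ennreal)
    then show ?thesis unfolding M_def using that gnn by (simp add: pmf_embed_pmf)
  qed
  have EI: "eps_implements Sig M f \<epsilon>"
    unfolding eps_implements_def
  proof (intro allI impI)
    fix p assume "profile Sig p"
    then have "pmf (M p) (f p) = g p (f p)" by (rule pmfM)
    moreover have "g p (f p) \<ge> 1 - e"
      unfolding g_def using c0 by (auto intro!: mult_nonneg_nonneg sum_nonneg simp: wt_def)
    ultimately show "pmf (M p) (f p) \<ge> 1 - \<epsilon>" using e0 by linarith
  qed
  have LT: "lex_truthful Sig M"
    unfolding lex_truthful_def
  proof (intro allI impI)
    fix j p r r'
    assume A: "profile Sig p \<and> r \<in> Sig j \<and> r' \<in> Sig j"
    have rr: "ranking r" "ranking r'" using A R by auto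
    have pr1: "profile Sig (p(j:=r))" "profile Sig (p(j:=r'))" using A unfolding profile_def by auto
    define o1 where "o1 = f (p(j:=r))"
    define o2 where "o2 = f (p(j:=r'))"
    define P where "P = M (p(j:=r))"
    define Q where "Q = M (p(j:=r'))"
    define D where "D a = (1-e) * ((if o1 = a then 1 else 0) - (if o2 = a then 1 else 0))
        + c * (wt r a - wt r' a)" for a
    have Dd: "pmf P a - pmf Q a = D a" for a
    proof -
      have s1: "(\<Sum>j'\<in>UNIV. wt ((p(j:=r)) j') a) = wt r a + (\<Sum>j'\<in>UNIV-{j}. wt (p j') a)"
        by (subst sum_upd[of _ j]) simp
      have s2: "(\<Sum>j'\<in>UNIV. wt ((p(j:=r')) j') a) = wt r' a + (\<Sum>j'\<in>UNIV-{j}. wt (p j') a)"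
        by (subst sum_upd[of _ j]) simp
      show ?thesis unfolding P_def Q_def pmfM[OF pr1(1)] pmfM[OF pr1(2)] D_def g_def
          o1_def[symmetric] o2_def[symmetric] s1 s2
        by (simp add: algebra_simps)
    qed
    show "M (p(j := r)) = M (p(j := r')) \<or> lex_dominates r (M (p(j := r))) (M (p(j := r')))"
    proof (cases "r = r'")
      case True then show ?thesis by simp
    next
      case False
      have len: "length r' = length r" using rr ranking_len by metis
      have "\<exists>i. i<length r \<and> r ! i \<noteq> r' ! i"
        using False len nth_equalityI by metis
      then obtain k0 where k0: "k0<length r \<and> r ! k0 \<noteq> r' ! k0" by blast
      define k where "k = (LEAST i. i<length r \<and> r ! i \<noteq> r' ! i)"
      have k1: "k<length r \<and> r ! k \<noteq> r' ! k" unfolding k_def by (rule LeastI[where P="\<lambda>i. i<length r \<and> r ! i \<noteq> r' ! i", OF k0])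
      have k2: "\<forall>l<k. r ! l = r' ! l"
      proof (intro allI impI)
        fix l assume "l < k"
        then have "\<not> (l<length r \<and> r ! l \<noteq> r' ! l)" unfolding k_def by (rule not_less_Least)
        then show "r ! l = r' ! l" using \<open>l < k\<close> k1 by auto
      qed
      have k: "k < length r" "r ! k \<noteq> r' ! k" "\<forall>l<k. r ! l = r' ! l" using k1 k2 by auto
      have posk: "pos r (r!l) = l" "pos r' (r!l) = l" if "l < k" for l
        using that k pos_nth rr len by (metis less_trans)+
      have wtl: "wt r (r!l) = wt r' (r!l)" if "l < k" for l
        unfolding wt_def using posk[OF that] by simp
      have pk: "pos r (r!k) = k" using pos_nth[OF rr(1) k(1)] .
      have pk': "pos r' (r!k) > k"
      proof -
        have a: "pos r' (r!k) \<noteq> k" using pos_ok[OF rr(2), of "r!k"] k(2) by metis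
        have b: "\<not> pos r' (r!k) < k"
        proof
          assume lt: "pos r' (r!k) < k"
          then have "r ! pos r' (r!k) = r!k" using k(3) pos_ok[OF rr(2), of "r!k"] by metis
          then have "pos r' (r!k) = k" using pos_nth[OF rr(1)] k(1) lt
            by (metis less_trans)
          then show False using lt by simp
        qed
        from a b show ?thesis by linarith
      qed
      have lenr: "length r = m" using ranking_len[OF rr(1)] m_def by simp
      have wk: "wt r (r!k) > wt r' (r!k)"
        unfolding wt_def using pk pk' k(1) lenr m_def pos_ok[OF rr(2), of "r!k"] len by simp
      have ck: "c * (wt r (r!k) - wt r' (r!k)) > 0" using wk c0 by simp
      have e1: "1 - e > 0" using e0 by simp
      have po1: "pos r o1 < length r" "r ! pos r o1 = o1" using pos_ok[OF rr(1)] by auto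
      have po2: "pos r o2 < length r" "r ! pos r o2 = o2" using pos_ok[OF rr(1)] by auto
      have main: "\<exists>i<length r. D (r!i) > 0 \<and> (\<forall>l<i. D (r!l) = 0)"
      proof -
        consider "o1 = o2" | "pos r o1 < pos r o2" | "pos r o2 < pos r o1"
          using pos_inj[OF rr(1), of o1 o2] by linarith
        then show ?thesis
        proof cases
          case 1
          have "D (r!k) > 0" using ck 1 unfolding D_def by simp
          moreover have "\<forall>l<k. D (r!l) = 0" using wtl 1 unfolding D_def by simp
          ultimately show ?thesis using k(1) by blast
        next
          case 2
          then have ne: "o1 \<noteq> o2" by auto
          show ?thesis
          proof (cases "pos r o1 < k")
            case True
            have "D (r!pos r o1) > 0" using ne wtl[OF True] e1 po1 unfolding D_def by simp
            moreover have "\<forall>l<pos r o1. D (r!l) = 0"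
            proof (intro allI impI)
              fix l assume l: "l < pos r o1"
              have "r!l \<noteq> o1" using l po1 pos_nth[OF rr(1)] by (metis less_trans less_irrefl)
              moreover have "r!l \<noteq> o2" using l 2 po1 pos_nth[OF rr(1)] by (metis less_trans less_irrefl)
              ultimately show "D (r!l) = 0" using wtl l True unfolding D_def by auto
            qed
            ultimately show ?thesis using po1 by blast
          next
            case False
            have n2: "r!k \<noteq> o2" using pk 2 False by auto
            have "D (r!k) > 0"
            proof (cases "r!k = o1")
              case True then show ?thesis using n2 ck e1 unfolding D_def by simp
            next
              case False then show ?thesis using n2 ck unfolding D_def by simp
            qed
            moreover have "\<forall>l<k. D (r!l) = 0"
            proof (intro allI impI)
              fix l assume l: "l < k"
              have "r!l \<noteq> o1" using l False posk by (metis)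
              moreover have "r!l \<noteq> o2" using l False 2 posk by (metis less_trans)
              ultimately show "D (r!l) = 0" using wtl l unfolding D_def by auto
            qed
            ultimately show ?thesis using k(1) by blast
          qed
        next
          case 3
          have "weakly_prefers r o1 o2 \<or> (\<exists>o3. prefers r o3 o2 \<and> pos r o3 < pos r' o3)"
            using PM A unfolding pseudomonotone_def Let_def o1_def o2_def by blast
          then obtain o3 where o3: "pos r o3 < pos r o2" "pos r o3 < pos r' o3"
            using 3 unfolding weakly_prefers_def prefers_def by auto
          have kle: "k \<le> pos r o3"
          proof (rule ccontr)
            assume "\<not> k \<le> pos r o3"
            then have "pos r o3 < k" by simp
            then have "pos r' (r ! pos r o3) = pos r o3" by (rule posk)
            then show False using o3 pos_ok[OF rr(1), of o3] by simp
          qed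
          have n2: "r!k \<noteq> o2" using pk o3 kle by auto
          have n1: "r!k \<noteq> o1" using pk o3 kle 3 by auto
          have "D (r!k) > 0" using n1 n2 ck unfolding D_def by simp
          moreover have "\<forall>l<k. D (r!l) = 0"
          proof (intro allI impI)
            fix l assume l: "l < k"
            have "r!l \<noteq> o2" using l kle o3 posk by (metis less_le_trans less_irrefl less_trans)
            moreover have "r!l \<noteq> o1" using l kle o3 3 posk by (metis less_le_trans less_irrefl less_trans)
            ultimately show "D (r!l) = 0" using wtl l unfolding D_def by auto
          qed
          ultimately show ?thesis using k(1) by blast
        qed
      qed
      then obtain i where i: "i < length r" "D (r!i) > 0" "\<forall>l<i. D (r!l) = 0" by blast
      have "pmf P (r!i) > pmf Q (r!i)" using Dd[of "r!i"] i by simp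
      moreover have "\<forall>l<i. pmf P (r!l) = pmf Q (r!l)" using Dd i by (metis eq_iff_diff_eq_0)
      moreover have "P \<noteq> Q" using calculation(1) by auto
      ultimately have "lex_dominates r P Q" unfolding lex_dominates_def using i(1) by blast
      then show ?thesis unfolding P_def Q_def by simp
    qed
  qed
  show ?thesis using LT EI by blast
qed

theorem theorem4:
  fixes Sig :: "'n::finite \<Rightarrow> 'o::finite list set"
    and f :: "('n \<Rightarrow> 'o list) \<Rightarrow> 'o"
  assumes "\<forall>j. \<forall>r \<in> Sig j. ranking r"
  shows "(pseudomonotone Sig f \<longrightarrow>
            (\<forall>\<epsilon>::real. \<epsilon> > 0 \<longrightarrow> (\<exists>M. lex_truthful Sig M \<and> eps_implements Sig M f \<epsilon>)))
       \<and> ((\<exists>\<epsilon>::real. \<epsilon> < 1/2 \<and> (\<exists>M. lex_truthful Sig M \<and> eps_implements Sig M f \<epsilon>))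
            \<longrightarrow> pseudomonotone Sig f)"
  using part1[OF assms] part2[OF assms] by blast

end
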